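(* For every $1\le j\le m+n$, as operators on $\widetilde T(\mathbb V)$, $$L(e_j)L(e_j^\ast)=\frac{K_j-K_j^{-1}}{q_j-q_j^{-1}}.$$
   Context: $q$ is an indeterminate, $m,n\ge1$, $[m+n]=\{1,\dots,m+n\}$. The Hecke algebra $\mathscr H_d$ is the $\mathbb C(q)$-algebra generated by $T_1,\dots,T_{d-1}$ with relations $(T_i-q)(T_i+q^{-1})=0$, $T_iT_{i+1}T_i=T_{i+1}T_iT_{i+1}$, $T_iT_j=T_jT_i$ ($|i-j|>1$); $T_w=T_{i_1}\cdots T_{i_k}$ for a reduced expression $w=s_{i_1}\cdots s_{i_k}\in\mathfrak S_d$; $\mathscr H_\infty$ is the inductive limit of $\mathscr H_0\subset\mathscr H_1\subset\cdots$, and $T\mapsto T^{\uparrow k}$ is the algebra endomorphism with $T_i^{\uparrow k}=T_{i+k}$. Parity: $\hat i=0$ if $i\le m$, $\hat i=1$ if $i>m$; $q_i=q^{(-1)^{\hat i}}$. $\gamma(i,j)=1$ if $i>j$ and $-1$ if $i\le j$. $\mathbb V$ is the $\mathbb C(q)$-vector space with basis $e_1,\dots,e_{m+n}$, $e_i$ of parity $\hat i$; $e_1^\ast,\dots,e_{m+n}^\ast$ is the dual basis. For $I=(i_d,\dots,i_1)\in[m+n]^d$, $e_I=e_{i_d}\otimes\cdots\otimes e_{i_1}$, written $e_{i_d}\cdots e_{i_1}$; $I.s_k$ is $I$ with the entries $i_k,i_{k+1}$ swapped. The right $\mathscr H_d$-action on $\mathbb V^{\otimes d}$: $e_I.T_k=(-1)^{\hat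 i_k\hat i_{k+1}}e_{I.s_k}$ if $i_k>i_{k+1}$; $=(-1)^{\hat i_k}q_{i_k}e_I$ if $i_k=i_{k+1}$; $=(-1)^{\hat i_k\hat i_{k+1}}e_{I.s_k}+(q-q^{-1})e_I$ if $i_k<i_{k+1}$. Set $\widetilde T_d(\mathbb V)=\mathbb V^{\otimes d}\otimes_{\mathscr H_d}\mathscr H_\infty$, $\widetilde T(\mathbb V)=\bigoplus_{d\ge0}\widetilde T_d(\mathbb V)$, with product $(e_{j_k}\cdots e_{j_1}\otimes T_\tau)\cdot(e_{i_d}\cdots e_{i_1}\otimes T_\sigma)=e_{j_k}\cdots e_{j_1}e_{i_d}\cdots e_{i_1}\otimes T_\tau^{\uparrow d}T_\sigma$. For $\varphi\in\widetilde T(\mathbb V)$, $L(\varphi)$ is left multiplication by $\varphi$; $L(e_i)$ uses $e_i\otimes1\in\widetilde T_1(\mathbb V)$. For $j\in[m+n]$, $f_j(e_r)=q_j^{-\delta_{jr}}e_r$ and $g_j(e_r)=e_r\otimes T_1^{-\gamma(j,r)}\in\widetilde T_1(\mathbb V)$, and $L(e_j^\ast)=0$ on $\widetilde T_0(\mathbb V)$, $$L(e_j^\ast)(e_{i_d}\cdots e_{i_1}\otimes T_\sigma)=\sum_{k=1}^d(-1)^{\hat j(\hat i_d+\cdots+\hat i_{k+1})}\langle e_j^\ast,e_{i_k}\rangle\,g_j(e_{i_d})\cdots g_j(e_{i_{k+1}})f_j(e_{i_{k-1}})\cdots f_j(e_{i_1})\cdot T_\sigma$$ (product in $\widetilde T(\mathbb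 V)$). The operator $K_j$ ($j\in[m+n]$) on $\widetilde T(\mathbb V)$ acts by $K_j(e_I\otimes T)=q_j^{\#\{r:\,i_r=j\}}\,e_I\otimes T$. *)

theory Defs
  imports Main "HOL-Computational_Algebra.Polynomial" "HOL-Computational_Algebra.Fraction_Field"
begin

(* Ground field C(q): fractions of complex polynomials; q is the indeterminate. *)
type_synonym K = "complex poly fract"

definition qq :: K where "qq = Fract [:0, 1:] 1"

definition par :: "nat \<Rightarrow> nat \<Rightarrow> nat" where
  "par m i = (if i \<le> m then 0 else 1)"
definition qsub :: "nat \<Rightarrow> nat \<Rightarrow> K" where
  "qsub m i = (if i \<le> m then qq else inverse qq)"

(* Basis symbols (I, w): I = [i_1, ..., i_d] (note: listed from i_1 to i_d) stands for
   e_{i_d} ... e_{i_1}; w = [k_1,...,k_r] is the word T_{k_1} ... T_{k_r} in the generators of H_infty.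
   The pair stands for e_I \<otimes> T_{k_1}...T_{k_r}. *)
type_synonym bs = "nat list \<times> nat list"
type_synonym vec = "bs \<Rightarrow> K"

definition bas :: "bs \<Rightarrow> vec" where "bas b = (\<lambda>c. if c = b then 1 else 0)"
definition smul :: "K \<Rightarrow> vec \<Rightarrow> vec" where "smul a x = (\<lambda>c. a * x c)"
definition vplus :: "vec \<Rightarrow> vec \<Rightarrow> vec" where "vplus x y = (\<lambda>c. x c + y c)"
definition vminus :: "vec \<Rightarrow> vec \<Rightarrow> vec" where "vminus x y = (\<lambda>c. x c - y c)"
definition supp :: "vec \<Rightarrow> bs set" where "supp x = {b. x b \<noteq> 0}"

definition ext :: "(bs \<Rightarrow> vec) \<Rightarrow> vec \<Rightarrow> vec" where
  "ext F x = (\<lambda>c. \<Sum>b\<in>supp x. x b * F b c)"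

(* product of basis symbols:
   (e_{j_k}..e_{j_1} \<otimes> T_\<tau>)(e_{i_d}..e_{i_1} \<otimes> T_\<sigma>) = e_{j_k}..e_{j_1} e_{i_d}..e_{i_1} \<otimes> T_\<tau>^{\<up>d} T_\<sigma> *)
definition bmul :: "bs \<Rightarrow> bs \<Rightarrow> bs" where
  "bmul a b = (fst b @ fst a, map (\<lambda>t. t + length (fst b)) (snd a) @ snd b)"
definition tmul :: "vec \<Rightarrow> vec \<Rightarrow> vec" where
  "tmul x y = (\<lambda>c. \<Sum>a\<in>supp x. \<Sum>b\<in>supp y. if bmul a b = c then x a * y b else 0)"
definition tone :: vec where "tone = bas ([], [])"
definition tprod :: "vec list \<Rightarrow> vec" where "tprod xs = foldr tmul xs tone"

definition valid :: "nat \<Rightarrow> nat \<Rightarrow> bs \<Rightarrow> bool" where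
  "valid m n b \<longleftrightarrow> set (fst b) \<subseteq> {1..m+n} \<and> 0 \<notin> set (snd b)"

(* e_I.T_k \<otimes> w  (right action of T_k on V^{\<otimes>d}, 1 \<le> k < d); i_k = I!(k-1), i_{k+1} = I!k *)
definition actT :: "nat \<Rightarrow> nat list \<Rightarrow> nat \<Rightarrow> nat list \<Rightarrow> vec" where
  "actT m I k w = (let a = I ! (k - 1); b = I ! k; s = I[k - 1 := b, k := a] in
     if b < a then smul ((-1) ^ (par m a * par m b)) (bas (s, w))
     else if a = b then smul ((-1) ^ (par m a) * qsub m a) (bas (I, w))
     else vplus (smul ((-1) ^ (par m a * par m b)) (bas (s, w))) (smul (qq - inverse qq) (bas (I, w))))"

definition heckerel :: "nat \<Rightarrow> nat \<Rightarrow> vec set" where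
  "heckerel m n =
     {vminus (vminus (bas (I, u @ [i, i] @ v)) (smul (qq - inverse qq) (bas (I, u @ [i] @ v)))) (bas (I, u @ v))
        | I u v i. valid m n (I, u @ v) \<and> 1 \<le> i}
   \<union> {vminus (bas (I, u @ [i, i + 1, i] @ v)) (bas (I, u @ [i + 1, i, i + 1] @ v))
        | I u v i. valid m n (I, u @ v) \<and> 1 \<le> i}
   \<union> {vminus (bas (I, u @ [i, k] @ v)) (bas (I, u @ [k, i] @ v))
        | I u v i k. valid m n (I, u @ v) \<and> 1 \<le> i \<and> 1 \<le> k \<and> i + 1 < k}"

(* balancing relations of the tensor product over H_d: e_I.T_k \<otimes> h = e_I \<otimes> T_k h *)
definition balrel :: "nat \<Rightarrow> nat \<Rightarrow> vec set" where
  "balrel m n = {vminus (actT m I k w) (bas (I, k # w)) | I k w. valid m n (I, w) \<and> 1 \<le> k \<and> k < length I}"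

definition rspan :: "vec set \<Rightarrow> vec set" where
  "rspan R = {x. \<exists>S c. finite S \<and> S \<subseteq> R \<and> x = (\<lambda>b. \<Sum>r\<in>S. c r * r b)}"

(* equality in \<widetilde>T(V) = (V^{\<otimes>*} \<otimes> free algebra) / relations *)
definition tequiv :: "nat \<Rightarrow> nat \<Rightarrow> vec \<Rightarrow> vec \<Rightarrow> bool" where
  "tequiv m n x y \<longleftrightarrow> vminus x y \<in> rspan (heckerel m n \<union> balrel m n)"

(* representatives of elements of \<widetilde>T(V) *)
definition freeT :: "nat \<Rightarrow> nat \<Rightarrow> vec set" where
  "freeT m n = {x. finite (supp x) \<and> supp x \<subseteq> {b. valid m n b}}"

definition Lvec :: "nat \<Rightarrow> bs \<Rightarrow> vec" where
  "Lvec j b = tmul (bas ([j], [])) (bas b)"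

(* f_j(e_r), g_j(e_r) in \<widetilde>T_1(V); T_1^{-1} = T_1 - (q - q^{-1}) *)
definition fvec :: "nat \<Rightarrow> nat \<Rightarrow> nat \<Rightarrow> vec" where
  "fvec m j r = smul (if j = r then inverse (qsub m j) else 1) (bas ([r], []))"
definition gvec :: "nat \<Rightarrow> nat \<Rightarrow> nat \<Rightarrow> vec" where
  "gvec m j r = (if j > r then vminus (bas ([r], [1])) (smul (qq - inverse qq) (bas ([r], [])))
                 else bas ([r], [1]))"

definition Ldual :: "nat \<Rightarrow> nat \<Rightarrow> bs \<Rightarrow> vec" where
  "Ldual m j b = (let I = fst b; w = snd b; d = length I in
     (\<lambda>c. \<Sum>k\<in>{1..d}.
        ((-1) ^ (par m j * sum_list (map (par m) (drop k I))) * (if I ! (k - 1) = j then 1 else 0))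
        * tmul (tprod (map (gvec m j) (rev (drop k I)) @ map (fvec m j) (rev (take (k - 1) I))))
               (bas ([], w)) c))"

definition Kvec :: "nat \<Rightarrow> nat \<Rightarrow> bs \<Rightarrow> vec" where
  "Kvec m j b = smul (qsub m j ^ length (filter (\<lambda>i. i = j) (fst b))) (bas b)"
definition Kinv :: "nat \<Rightarrow> nat \<Rightarrow> bs \<Rightarrow> vec" where
  "Kinv m j b = smul (inverse (qsub m j) ^ length (filter (\<lambda>i. i = j) (fst b))) (bas b)"

end

theory Submission
  imports Defs
begin


abbreviation R :: "nat \<Rightarrow> nat \<Rightarrow> vec set" where "R m n \<equiv> rspan (heckerel m n \<union> balrel m n)"

lemma rspan_zero: "(\<lambda>b. 0) \<in> rspan S"
  unfolding rspan_def by (rule CollectI, rule exI[of _ "{}"]) auto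

lemma rspan_base: "r \<in> S \<Longrightarrow> r \<in> rspan S"
  unfolding rspan_def by (rule CollectI, rule exI[of _ "{r}"], rule exI[of _ "\<lambda>_. 1"]) auto

lemma rspan_smul: "x \<in> rspan S \<Longrightarrow> (\<lambda>b. a * x b) \<in> rspan S"
proof -
  assume "x \<in> rspan S"
  then obtain T c where "finite T" "T \<subseteq> S" "x = (\<lambda>b. \<Sum>r\<in>T. c r * r b)" unfolding rspan_def by auto
  then show ?thesis unfolding rspan_def
    by (intro CollectI exI[of _ T] exI[of _ "\<lambda>r. a * c r"]) (auto simp: sum_distrib_left mult.assoc)
qed

lemma rspan_add: "x \<in> rspan S \<Longrightarrow> y \<in> rspan S \<Longrightarrow> (\<lambda>b. x b + y b) \<in> rspan S"
proof -
  assume "x \<in> rspan S" "y \<in> rspan S"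
  then obtain T c T' c' where a: "finite T" "T \<subseteq> S" "x = (\<lambda>b. \<Sum>r\<in>T. c r * r b)"
   and b: "finite T'" "T' \<subseteq> S" "y = (\<lambda>b. \<Sum>r\<in>T'. c' r * r b)" unfolding rspan_def by auto
  define d where "d r = (if r \<in> T then c r else 0) + (if r \<in> T' then c' r else 0)" for r
  have "(\<lambda>b. x b + y b) = (\<lambda>b. \<Sum>r\<in>T \<union> T'. d r * r b)"
  proof
    fix b
    have 1: "(\<Sum>r\<in>T \<union> T'. (if r \<in> T then c r else 0) * r b) = (\<Sum>r\<in>T. c r * r b)"
      by (rule sum.mono_neutral_cong_right) (use a b in auto)
    have 2: "(\<Sum>r\<in>T \<union> T'. (if r \<in> T' then c' r else 0) * r b) = (\<Sum>r\<in>T'. c' r * r b)"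
      by (rule sum.mono_neutral_cong_right) (use a b in auto)
    show "x b + y b = (\<Sum>r\<in>T \<union> T'. d r * r b)"
      unfolding d_def distrib_right sum.distrib 1 2 using a b by simp
  qed
  then show ?thesis unfolding rspan_def using a b
    by (intro CollectI exI[of _ "T \<union> T'"] exI[of _ d]) auto
qed

lemma rspan_sum: "(\<And>i. i \<in> F \<Longrightarrow> v i \<in> rspan S) \<Longrightarrow> (\<lambda>b. \<Sum>i\<in>F. v i b) \<in> rspan S"
proof (induction F rule: infinite_finite_induct)
  case (infinite A) then show ?case using rspan_zero by simp
next
  case empty then show ?case using rspan_zero by simp
next
  case (insert x F) then show ?case using rspan_add[of "v x" S "\<lambda>b. \<Sum>i\<in>F. v i b"] by simp
qed

lemma rspan_minus: "x \<in> rspan S \<Longrightarrow> y \<in> rspan S \<Longrightarrow> (\<lambda>b. x b - y b) \<in> rspan S"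
  using rspan_add[of x S "\<lambda>b. (-1) * y b"] rspan_smul[of y S "-1"] by simp

lemma rspan_eq: "x \<in> rspan S \<Longrightarrow> x = y \<Longrightarrow> y \<in> rspan S" by simp



lemma supp_bas[simp]: "supp (bas b) = {b}" unfolding supp_def bas_def by auto

lemma bas_freeT: "valid m n b \<Longrightarrow> bas b \<in> freeT m n" unfolding freeT_def by auto

lemma supp_smul: "supp (smul a x) \<subseteq> supp x" unfolding supp_def smul_def by auto
lemma supp_vplus: "supp (vplus x y) \<subseteq> supp x \<union> supp y" unfolding supp_def vplus_def by auto
lemma supp_vminus: "supp (vminus x y) \<subseteq> supp x \<union> supp y" unfolding supp_def vminus_def by auto

lemma smul_freeT: "x \<in> freeT m n \<Longrightarrow> smul a x \<in> freeT m n"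
  unfolding freeT_def using supp_smul[of a x] finite_subset[of "supp (smul a x)" "supp x"] by auto
lemma vplus_freeT: "x \<in> freeT m n \<Longrightarrow> y \<in> freeT m n \<Longrightarrow> vplus x y \<in> freeT m n"
  unfolding freeT_def using supp_vplus[of x y] finite_subset[of "supp (vplus x y)" "supp x \<union> supp y"] by auto
lemma vminus_freeT: "x \<in> freeT m n \<Longrightarrow> y \<in> freeT m n \<Longrightarrow> vminus x y \<in> freeT m n"
  unfolding freeT_def using supp_vminus[of x y] finite_subset[of "supp (vminus x y)" "supp x \<union> supp y"] by auto

lemma tmul_expand:
  assumes "finite A" "supp x \<subseteq> A" "finite B" "supp y \<subseteq> B"
  shows "tmul x y c = (\<Sum>a\<in>A. \<Sum>b\<in>B. if bmul a b = c then x a * y b else 0)"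
proof -
  have i: "(\<Sum>b\<in>supp y. if bmul a b = c then x a * y b else 0) = (\<Sum>b\<in>B. if bmul a b = c then x a * y b else 0)" for a
    by (rule sum.mono_neutral_left) (use assms in \<open>auto simp: supp_def\<close>)
  have z: "(\<Sum>b\<in>B. if bmul a b = c then x a * y b else 0) = 0" if "a \<notin> supp x" for a
    using that by (intro sum.neutral) (auto simp: supp_def)
  have "tmul x y c = (\<Sum>a\<in>supp x. \<Sum>b\<in>B. if bmul a b = c then x a * y b else 0)"
    unfolding tmul_def i ..
  also have "\<dots> = (\<Sum>a\<in>A. \<Sum>b\<in>B. if bmul a b = c then x a * y b else 0)"
    by (rule sum.mono_neutral_left) (use assms z in auto)
  finally show ?thesis .
qed

lemma supp_tmul: "supp (tmul x y) \<subseteq> (\<lambda>(a,b). bmul a b) ` (supp x \<times> supp y)"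
proof
  fix c assume "c \<in> supp (tmul x y)"
  then have "tmul x y c \<noteq> 0" by (simp add: supp_def)
  then obtain a where a: "a \<in> supp x" "(\<Sum>b\<in>supp y. if bmul a b = c then x a * y b else 0) \<noteq> 0"
    unfolding tmul_def using sum.not_neutral_contains_not_neutral by blast
  then obtain b where b: "b \<in> supp y" "(if bmul a b = c then x a * y b else 0) \<noteq> 0"
    using sum.not_neutral_contains_not_neutral by blast
  then have "bmul a b = c" by presburger
  then show "c \<in> (\<lambda>(a,b). bmul a b) ` (supp x \<times> supp y)" using a b by force
qed

lemma valid_bmul: "valid m n a \<Longrightarrow> valid m n b \<Longrightarrow> valid m n (bmul a b)"
  unfolding valid_def bmul_def by auto

lemma tmul_freeT: "x \<in> freeT m n \<Longrightarrow> y \<in> freeT m n \<Longrightarrow> tmul x y \<in> freeT m n"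
proof -
  assume a: "x \<in> freeT m n" "y \<in> freeT m n"
  have "supp (tmul x y) \<subseteq> Collect (valid m n)"
  proof
    fix c assume "c \<in> supp (tmul x y)"
    then obtain a b where "a \<in> supp x" "b \<in> supp y" "c = bmul a b" using subsetD[OF supp_tmul[of x y]] by fastforce
    then show "c \<in> Collect (valid m n)" using a valid_bmul[of m n a b] unfolding freeT_def by auto
  qed
  moreover have "finite (supp (tmul x y))" by (rule finite_subset[OF supp_tmul]) (use a in \<open>auto simp: freeT_def\<close>)
  ultimately show ?thesis unfolding freeT_def by auto
qed

lemma finite_supp_tmul: "finite (supp x) \<Longrightarrow> finite (supp y) \<Longrightarrow> finite (supp (tmul x y))"
  by (rule finite_subset[OF supp_tmul]) auto

lemma tmul_bas_bas: "tmul (bas a) (bas b) = bas (bmul a b)"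
  unfolding tmul_def supp_bas by (auto simp: bas_def)

lemma tmul_smul_left: "finite (supp x) \<Longrightarrow> finite (supp y) \<Longrightarrow> tmul (smul a x) y = smul a (tmul x y)"
  apply (rule ext)
  apply (subst tmul_expand[where A="supp x" and B="supp y"], (use supp_smul in auto)[4])
  apply (subst (2) smul_def, subst tmul_expand[where A="supp x" and B="supp y"], auto)
  apply (auto simp: smul_def sum_distrib_left intro!: sum.cong)
  done

lemma tmul_smul_right: "finite (supp x) \<Longrightarrow> finite (supp y) \<Longrightarrow> tmul x (smul a y) = smul a (tmul x y)"
  apply (rule ext)
  apply (subst tmul_expand[where A="supp x" and B="supp y"], (use supp_smul in auto)[4])
  apply (subst (2) smul_def, subst tmul_expand[where A="supp x" and B="supp y"], auto)
  apply (auto simp: smul_def sum_distrib_left intro!: sum.cong)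
  done

lemma tmul_vplus_left: "finite (supp x) \<Longrightarrow> finite (supp x') \<Longrightarrow> finite (supp y) \<Longrightarrow>
   tmul (vplus x x') y = vplus (tmul x y) (tmul x' y)"
  apply (rule ext)
  apply (subst tmul_expand[where A="supp x \<union> supp x'" and B="supp y"], (use supp_vplus in auto)[4])
  apply (subst (2) vplus_def, subst tmul_expand[where A="supp x \<union> supp x'" and B="supp y"], auto)
  apply (subst tmul_expand[where A="supp x \<union> supp x'" and B="supp y"], auto)
  apply (auto simp: vplus_def sum.distrib[symmetric] distrib_right intro!: sum.cong)
  done

lemma tmul_vminus_left: "finite (supp x) \<Longrightarrow> finite (supp x') \<Longrightarrow> finite (supp y) \<Longrightarrow>
   tmul (vminus x x') y = vminus (tmul x y) (tmul x' y)"
  apply (rule ext)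
  apply (subst tmul_expand[where A="supp x \<union> supp x'" and B="supp y"], (use supp_vminus in auto)[4])
  apply (subst (2) vminus_def, subst tmul_expand[where A="supp x \<union> supp x'" and B="supp y"], auto)
  apply (subst tmul_expand[where A="supp x \<union> supp x'" and B="supp y"], auto)
  apply (auto simp: vminus_def sum_subtractf[symmetric] left_diff_distrib intro!: sum.cong)
  done

lemma tmul_vminus_right: "finite (supp x) \<Longrightarrow> finite (supp y) \<Longrightarrow> finite (supp y') \<Longrightarrow>
   tmul x (vminus y y') = vminus (tmul x y) (tmul x y')"
  apply (rule ext)
  apply (subst tmul_expand[where A="supp x" and B="supp y \<union> supp y'"], (use supp_vminus in auto)[4])
  apply (subst (2) vminus_def, subst tmul_expand[where A="supp x" and B="supp y \<union> supp y'"], auto)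
  apply (subst tmul_expand[where A="supp x" and B="supp y \<union> supp y'"], auto)
  apply (auto simp: vminus_def sum_subtractf[symmetric] right_diff_distrib intro!: sum.cong)
  done

lemma bmul_assoc: "bmul (bmul a b) c = bmul a (bmul b c)"
  unfolding bmul_def by (simp add: add.assoc)



lemma tmul_assoc:
  assumes fx: "finite (supp x)" and fy: "finite (supp y)" and fz: "finite (supp z)"
  shows "tmul (tmul x y) z = tmul x (tmul y z)"
proof
  fix c
  define A where "A = supp x" define B where "B = supp y" define C where "C = supp z"
  define D where "D = (\<lambda>(a,b). bmul a b) ` (A \<times> B)"
  define E where "E = (\<lambda>(a,b). bmul a b) ` (B \<times> C)"
  have fin: "finite A" "finite B" "finite C" "finite D" "finite E" using assms by (auto simp: A_def B_def C_def D_def E_def)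
  have sD: "supp (tmul x y) \<subseteq> D" unfolding D_def A_def B_def by (rule supp_tmul)
  have sE: "supp (tmul y z) \<subseteq> E" unfolding E_def B_def C_def by (rule supp_tmul)
  have xy: "tmul x y d = (\<Sum>a\<in>A. \<Sum>b\<in>B. if bmul a b = d then x a * y b else 0)" for d
    by (rule tmul_expand) (use fin in \<open>auto simp: A_def B_def\<close>)
  have yz: "tmul y z e = (\<Sum>b\<in>B. \<Sum>c'\<in>C. if bmul b c' = e then y b * z c' else 0)" for e
    by (rule tmul_expand) (use fin in \<open>auto simp: C_def B_def\<close>)
  have "tmul (tmul x y) z c = (\<Sum>d\<in>D. \<Sum>c'\<in>C. if bmul d c' = c then tmul x y d * z c' else 0)"
    by (rule tmul_expand) (use fin sD in \<open>auto simp: C_def\<close>)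
  also have "\<dots> = (\<Sum>d\<in>D. \<Sum>c'\<in>C. \<Sum>a\<in>A. \<Sum>b\<in>B. if d = bmul a b then (if bmul d c' = c then x a * y b * z c' else 0) else 0)"
    unfolding xy apply (intro sum.cong refl)
    subgoal for d c' by (cases "bmul d c' = c") (auto simp add: sum_distrib_right intro!: sum.cong sum.neutral)
    done
  also have "\<dots> = (\<Sum>a\<in>A. \<Sum>b\<in>B. \<Sum>c'\<in>C. \<Sum>d\<in>D. if d = bmul a b then (if bmul d c' = c then x a * y b * z c' else 0) else 0)"
    (is "?l = _")
  proof -
    have "?l = (\<Sum>d\<in>D. \<Sum>a\<in>A. \<Sum>c'\<in>C. \<Sum>b\<in>B. (if d = bmul a b then (if bmul d c' = c then x a * y b * z c' else 0) else 0))"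
      by (rule sum.cong[OF refl], rule sum.swap)
    also have "\<dots> = (\<Sum>d\<in>D. \<Sum>a\<in>A. \<Sum>b\<in>B. \<Sum>c'\<in>C. (if d = bmul a b then (if bmul d c' = c then x a * y b * z c' else 0) else 0))"
      by (rule sum.cong[OF refl], rule sum.cong[OF refl], rule sum.swap)
    also have "\<dots> = (\<Sum>a\<in>A. \<Sum>d\<in>D. \<Sum>b\<in>B. \<Sum>c'\<in>C. (if d = bmul a b then (if bmul d c' = c then x a * y b * z c' else 0) else 0))"
      by (rule sum.swap)
    also have "\<dots> = (\<Sum>a\<in>A. \<Sum>b\<in>B. \<Sum>d\<in>D. \<Sum>c'\<in>C. (if d = bmul a b then (if bmul d c' = c then x a * y b * z c' else 0) else 0))"
      by (rule sum.cong[OF refl], rule sum.swap)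
    also have "\<dots> = (\<Sum>a\<in>A. \<Sum>b\<in>B. \<Sum>c'\<in>C. \<Sum>d\<in>D. (if d = bmul a b then (if bmul d c' = c then x a * y b * z c' else 0) else 0))"
      by (rule sum.cong[OF refl], rule sum.cong[OF refl], rule sum.swap)
    finally show ?thesis .
  qed
  also have "\<dots> = (\<Sum>a\<in>A. \<Sum>b\<in>B. \<Sum>c'\<in>C. if bmul (bmul a b) c' = c then x a * y b * z c' else 0)"
    by (intro sum.cong refl) (use fin in \<open>auto simp: D_def\<close>)
  finally have L: "tmul (tmul x y) z c = (\<Sum>a\<in>A. \<Sum>b\<in>B. \<Sum>c'\<in>C. if bmul (bmul a b) c' = c then x a * y b * z c' else 0)" .
  have "tmul x (tmul y z) c = (\<Sum>a\<in>A. \<Sum>e\<in>E. if bmul a e = c then x a * tmul y z e else 0)"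
    by (rule tmul_expand) (use fin sE in \<open>auto simp: A_def\<close>)
  also have "\<dots> = (\<Sum>a\<in>A. \<Sum>e\<in>E. \<Sum>b\<in>B. \<Sum>c'\<in>C. if e = bmul b c' then (if bmul a e = c then x a * y b * z c' else 0) else 0)"
    unfolding yz apply (intro sum.cong refl)
    subgoal for a e by (cases "bmul a e = c") (auto simp add: sum_distrib_left mult.assoc intro!: sum.cong sum.neutral)
    done
  also have "\<dots> = (\<Sum>a\<in>A. \<Sum>b\<in>B. \<Sum>c'\<in>C. \<Sum>e\<in>E. if e = bmul b c' then (if bmul a e = c then x a * y b * z c' else 0) else 0)"
    (is "?l = _")
  proof -
    have "?l = (\<Sum>a\<in>A. \<Sum>b\<in>B. \<Sum>e\<in>E. \<Sum>c'\<in>C. (if e = bmul b c' then (if bmul a e = c then x a * y b * z c' else 0) else 0))"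
      by (rule sum.cong[OF refl], rule sum.swap)
    also have "\<dots> = (\<Sum>a\<in>A. \<Sum>b\<in>B. \<Sum>c'\<in>C. \<Sum>e\<in>E. (if e = bmul b c' then (if bmul a e = c then x a * y b * z c' else 0) else 0))"
      by (rule sum.cong[OF refl], rule sum.cong[OF refl], rule sum.swap)
    finally show ?thesis .
  qed
  also have "\<dots> = (\<Sum>a\<in>A. \<Sum>b\<in>B. \<Sum>c'\<in>C. if bmul (bmul a b) c' = c then x a * y b * z c' else 0)"
    by (intro sum.cong refl) (use fin in \<open>auto simp: E_def bmul_assoc\<close>)
  finally show "tmul (tmul x y) z c = tmul x (tmul y z) c" using L by simp
qed

definition lsh :: "nat \<Rightarrow> vec \<Rightarrow> vec" where
  "lsh p y c = (if fst c \<noteq> [] \<and> last (fst c) = p then y (butlast (fst c), snd c) else 0)"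

lemma lsh_bas: "lsh p (bas (B, v)) = bas (B @ [p], v)"
proof
  fix c :: bs
  obtain C v' where c: "c = (C, v')" by (cases c)
  show "lsh p (bas (B, v)) c = bas (B @ [p], v) c"
    unfolding c lsh_def bas_def by (cases C rule: rev_cases) auto
qed

lemma lsh_smul: "lsh p (smul a x) = smul a (lsh p x)"
  unfolding lsh_def smul_def by auto
lemma lsh_vplus: "lsh p (vplus x y) = vplus (lsh p x) (lsh p y)"
  unfolding lsh_def vplus_def by auto
lemma lsh_vminus: "lsh p (vminus x y) = vminus (lsh p x) (lsh p y)"
  unfolding lsh_def vminus_def by auto
lemma lsh_sum: "lsh p (\<lambda>c. \<Sum>i\<in>S. v i c) = (\<lambda>c. \<Sum>i\<in>S. lsh p (v i) c)"
  unfolding lsh_def by auto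
lemma lsh_ext: "lsh p (ext F Z) = ext (\<lambda>b. lsh p (F b)) Z"
  unfolding lsh_def ext_def by auto

lemma tmul_ej: assumes "finite (supp y)" shows "tmul (bas ([p], [])) y = lsh p y"
proof
  fix c :: bs
  obtain C v where c: "c = (C, v)" by (cases c)
  have b1: "bas ([p], []) ([p], []) = 1" by (simp add: bas_def)
  have "tmul (bas ([p], [])) y c = (\<Sum>b\<in>supp y. if (fst b @ [p], snd b) = c then bas ([p], []) ([p], []) * y b else 0)"
    by (subst tmul_expand[where A="{([p],[])}" and B="supp y"]) (use assms in \<open>simp_all add: bmul_def\<close>)
  also have "\<dots> = (\<Sum>b\<in>supp y. if (fst b @ [p], snd b) = c then y b else 0)"
    unfolding b1 mult_1 ..
  also have "\<dots> = lsh p y c"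
  proof (cases "C \<noteq> [] \<and> last C = p")
    case True
    have bl: "butlast C @ [p] = C" using True append_butlast_last_id[of C] by simp
    have e: "((fst b @ [p], snd b) = c) = (b = (butlast C, v))" for b
      unfolding c using bl by (cases b) auto
    have "(\<Sum>b\<in>supp y. if b = (butlast C, v) then y b else 0) = (if (butlast C, v) \<in> supp y then y (butlast C, v) else 0)"
      using assms by (simp add: sum.delta')
    also have "\<dots> = y (butlast C, v)" by (simp add: supp_def)
    finally show ?thesis unfolding e using True by (simp add: lsh_def c)
  next
    case False
    then have "(fst b @ [p], snd b) \<noteq> c" for b unfolding c by auto
    then have "(\<Sum>b\<in>supp y. if (fst b @ [p], snd b) = c then y b else 0) = 0" by simp
    moreover have "lsh p y c = 0" using False unfolding lsh_def c by auto
    ultimately show ?thesis by simp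
  qed
  finally show "tmul (bas ([p], [])) y c = lsh p y c" .
qed

lemma Lvec_eq: "Lvec j b = bas (fst b @ [j], snd b)"
  unfolding Lvec_def tmul_bas_bas by (simp add: bmul_def)

lemma ext_bas_id: assumes "finite (supp Z)" shows "ext bas Z = Z"
proof
  fix c
  have "ext bas Z c = (\<Sum>b\<in>supp Z. if b = c then Z b else 0)"
    unfolding ext_def bas_def by (intro sum.cong) auto
  also have "\<dots> = Z c" using assms by (simp add: supp_def)
  finally show "ext bas Z c = Z c" .
qed

lemma ext_Lvec: "finite (supp y) \<Longrightarrow> ext (Lvec j) y = lsh j y"
proof -
  assume f: "finite (supp y)"
  have "ext (Lvec j) y = ext (\<lambda>b. lsh j (bas b)) y"
    by (rule arg_cong[where f="\<lambda>F. ext F y"]) (auto simp: Lvec_eq lsh_bas)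
  also have "\<dots> = lsh j (ext bas y)" by (simp add: lsh_ext)
  finally show ?thesis using ext_bas_id[OF f] by simp
qed

lemma tmul_ext: assumes "finite (supp x)" "finite (supp Z)"
  shows "tmul x Z = ext (\<lambda>b. tmul x (bas b)) Z"
proof
  fix c
  have "ext (\<lambda>b. tmul x (bas b)) Z c = (\<Sum>b\<in>supp Z. Z b * (\<Sum>a\<in>supp x. \<Sum>b'\<in>{b}. if bmul a b' = c then x a * bas b b' else 0))"
    unfolding ext_def by (intro sum.cong refl arg_cong[where f="\<lambda>t. _ * t"] tmul_expand) (use assms in auto)
  also have "\<dots> = (\<Sum>b\<in>supp Z. \<Sum>a\<in>supp x. if bmul a b = c then x a * Z b else 0)"
    by (auto simp: sum_distrib_left bas_def intro!: sum.cong)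
  also have "\<dots> = tmul x Z c" unfolding tmul_def by (rule sum.swap)
  finally show "tmul x Z c = ext (\<lambda>b. tmul x (bas b)) Z c" by simp
qed

lemma ext_R: assumes "\<And>b. b \<in> supp Z \<Longrightarrow> vminus (F b) (G b) \<in> rspan S"
  shows "vminus (ext F Z) (ext G Z) \<in> rspan S"
proof -
  have "vminus (ext F Z) (ext G Z) = (\<lambda>c. \<Sum>b\<in>supp Z. (\<lambda>c. Z b * vminus (F b) (G b) c) c)"
    unfolding vminus_def ext_def by (auto simp: sum_subtractf[symmetric] right_diff_distrib)
  also have "\<dots> \<in> rspan S"
    by (rule rspan_sum, rule rspan_smul, rule assms)
  finally show ?thesis .
qed

lemma ext_smul: "ext (\<lambda>b. smul a (F b)) Z = smul a (ext F Z)"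
  unfolding ext_def smul_def by (auto simp: sum_distrib_left mult.left_commute)

lemma lsh_actT: assumes "1 \<le> k" "k < length I" shows "lsh p (actT m I k w) = actT m (I @ [p]) k w"
proof -
  have 1: "(I @ [p]) ! (k - 1) = I ! (k - 1)" "(I @ [p]) ! k = I ! k" using assms by (auto simp: nth_append)
  have 2: "(I @ [p])[k - 1 := a, k := b] = I[k - 1 := a, k := b] @ [p]" for a b using assms by (simp add: list_update_append1)
  show ?thesis unfolding actT_def Let_def 1 2 by (simp add: lsh_smul lsh_vplus lsh_bas)
qed

lemma lsh_R: assumes "y \<in> R m n" "1 \<le> p" "p \<le> m + n" shows "lsh p y \<in> R m n"
proof -
  obtain T c where T: "finite T" "T \<subseteq> heckerel m n \<union> balrel m n" "y = (\<lambda>b. \<Sum>r\<in>T. c r * r b)"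
    using assms(1) unfolding rspan_def by auto
  have vp: "valid m n (I, w) \<Longrightarrow> valid m n (I @ [p], w)" for I w using assms by (auto simp: valid_def)
  have mem: "lsh p r \<in> heckerel m n \<union> balrel m n" if "r \<in> heckerel m n \<union> balrel m n" for r
    using that
  proof
    assume "r \<in> heckerel m n"
    then consider (a) I u v i where "r = vminus (vminus (bas (I, u @ [i, i] @ v)) (smul (qq - inverse qq) (bas (I, u @ [i] @ v)))) (bas (I, u @ v))" "valid m n (I, u @ v)" "1 \<le> i"
      | (b) I u v i where "r = vminus (bas (I, u @ [i, i + 1, i] @ v)) (bas (I, u @ [i + 1, i, i + 1] @ v))" "valid m n (I, u @ v)" "1 \<le> i"
      | (c) I u v i k where "r = vminus (bas (I, u @ [i, k] @ v)) (bas (I, u @ [k, i] @ v))" "valid m n (I, u @ v)" "1 \<le> i" "1 \<le> k" "i + 1 < k"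
      unfolding heckerel_def by blast
    then show ?thesis
    proof cases
      case a
      have "lsh p r \<in> heckerel m n" unfolding heckerel_def
        by (rule UnI1, rule UnI1, rule CollectI, rule exI[of _ "I @ [p]"], rule exI[of _ u], rule exI[of _ v], rule exI[of _ i])
           (use a in \<open>simp add: lsh_vminus lsh_smul lsh_bas vp\<close>)
      then show ?thesis by simp
    next
      case b
      have "lsh p r \<in> heckerel m n" unfolding heckerel_def
        by (rule UnI1, rule UnI2, rule CollectI, rule exI[of _ "I @ [p]"], rule exI[of _ u], rule exI[of _ v], rule exI[of _ i])
           (use b in \<open>simp add: lsh_vminus lsh_smul lsh_bas vp\<close>)
      then show ?thesis by simp
    next
      case c
      have "lsh p r \<in> heckerel m n" unfolding heckerel_def
        by (rule UnI2, rule CollectI, rule exI[of _ "I @ [p]"], rule exI[of _ u], rule exI[of _ v], rule exI[of _ i], rule exI[of _ k])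
           (use c in \<open>simp add: lsh_vminus lsh_smul lsh_bas vp\<close>)
      then show ?thesis by simp
    qed
  next
    assume "r \<in> balrel m n"
    then obtain I k w where "r = vminus (actT m I k w) (bas (I, k # w))" "valid m n (I, w)" "1 \<le> k" "k < length I"
      unfolding balrel_def by blast
    then show ?thesis unfolding balrel_def
      by (intro UnI2 CollectI exI[of _ "I @ [p]"] exI[of _ k] exI[of _ w]) (simp add: lsh_vminus lsh_bas lsh_actT vp)
  qed
  have "lsh p y = (\<lambda>b. \<Sum>r\<in>T. (\<lambda>b. c r * lsh p r b) b)" unfolding T(3) lsh_def by auto
  also have "\<dots> \<in> R m n"
    by (rule rspan_sum, rule rspan_smul, rule rspan_base, rule mem) (use T in auto)
  finally show ?thesis .
qed



lemma R_trans: "vminus x y \<in> rspan S \<Longrightarrow> vminus y z \<in> rspan S \<Longrightarrow> vminus x z \<in> rspan S"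
  using rspan_add[of "vminus x y" S "vminus y z"] by (simp add: vminus_def)

lemma R_smul: "vminus x y \<in> rspan S \<Longrightarrow> vminus (smul a x) (smul a y) \<in> rspan S"
  using rspan_smul[of "vminus x y" S a] by (simp add: vminus_def smul_def right_diff_distrib)

lemma R_refl: "vminus x x \<in> rspan S"
  using rspan_zero[of S] by (simp add: vminus_def)

lemma R_neg: "vminus x y \<in> rspan S \<Longrightarrow> vminus y x \<in> rspan S"
  using rspan_smul[of "vminus x y" S "-1"] by (simp add: vminus_def)

lemma gvec_freeT: "1 \<le> p \<Longrightarrow> p \<le> m + n \<Longrightarrow> gvec m j p \<in> freeT m n"
  unfolding gvec_def by (auto intro!: vminus_freeT smul_freeT bas_freeT simp: valid_def)

lemma fvec_freeT: "1 \<le> p \<Longrightarrow> p \<le> m + n \<Longrightarrow> fvec m j p \<in> freeT m n"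
  unfolding fvec_def by (auto intro!: smul_freeT bas_freeT simp: valid_def)

lemma freeT_fin: "x \<in> freeT m n \<Longrightarrow> finite (supp x)" unfolding freeT_def by auto

lemma actT_swap:
  "actT m (B @ [p, j]) (length B + 1) v =
    (if j < p then smul ((-1) ^ (par m p * par m j)) (bas (B @ [j, p], v))
     else if p = j then smul ((-1) ^ par m p * qsub m p) (bas (B @ [p, j], v))
     else vplus (smul ((-1) ^ (par m p * par m j)) (bas (B @ [j, p], v))) (smul (qq - inverse qq) (bas (B @ [p, j], v))))"
proof -
  have 1: "(B @ [p, j]) ! (length B + 1 - 1) = p" "(B @ [p, j]) ! (length B + 1) = j" by (auto simp: nth_append)
  have 2: "(B @ [p, j])[length B + 1 - 1 := j, length B + 1 := p] = B @ [j, p]" by (simp add: list_update_append)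
  show ?thesis unfolding actT_def Let_def 1 2 by simp
qed

lemma swap_bas:
  assumes v: "valid m n (B, v)" and j: "1 \<le> j" "j \<le> m + n" and p: "1 \<le> p" "p \<le> m + n"
  shows "vminus (tmul (tmul (bas ([j], [])) (gvec m j p)) (bas (B, v)))
           (smul ((-1) ^ (par m j * par m p) * (if p = j then qsub m j else 1)) (bas (B @ [j, p], v))) \<in> R m n"
proof -
  define K where "K = B @ [p, j]"
  define k where "k = length B + 1"
  have vK: "valid m n (K, v)" using v j p by (auto simp: valid_def K_def)
  have rel: "vminus (actT m K k v) (bas (K, k # v)) \<in> R m n"
    unfolding balrel_def by (rule rspan_base, rule UnI2, rule CollectI, rule exI[of _ K], rule exI[of _ k], rule exI[of _ v])
      (use vK in \<open>auto simp: K_def k_def\<close>)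
  have fin1: "finite (supp (bas ([p], [1])))" "finite (supp (bas ([p], [])))" "finite (supp (bas ([j], [])))" "finite (supp (bas (B, v)))" by auto
  have b1: "tmul (bas ([j], [])) (bas ([p], [Suc 0])) = bas ([p, j], [Suc 0])" by (simp add: tmul_bas_bas bmul_def)
  have b0: "tmul (bas ([j], [])) (bas ([p], [])) = bas ([p, j], [])" by (simp add: tmul_bas_bas bmul_def)
  have c1: "tmul (bas ([p, j], [Suc 0])) (bas (B, v)) = bas (K, k # v)" by (simp add: tmul_bas_bas bmul_def K_def k_def)
  have c0: "tmul (bas ([p, j], [])) (bas (B, v)) = bas (K, v)" by (simp add: tmul_bas_bas bmul_def K_def)
  have aT: "actT m K k v = (if j < p then smul ((-1) ^ (par m p * par m j)) (bas (B @ [j, p], v))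
     else if p = j then smul ((-1) ^ par m p * qsub m p) (bas (K, v))
     else vplus (smul ((-1) ^ (par m p * par m j)) (bas (B @ [j, p], v))) (smul (qq - inverse qq) (bas (K, v))))"
    unfolding K_def k_def by (rule actT_swap)
  consider (gt) "p < j" | (lt) "j < p" | (eq) "p = j" by linarith
  then show ?thesis
  proof cases
    case gt
    have "tmul (tmul (bas ([j], [])) (gvec m j p)) (bas (B, v)) = vminus (bas (K, k # v)) (smul (qq - inverse qq) (bas (K, v)))"
      using gt by (simp add: gvec_def tmul_vminus_right tmul_smul_right tmul_vminus_left tmul_smul_left b1 b0 c1 c0
          finite_supp_tmul supp_vminus supp_smul finite_subset[OF supp_smul] finite_subset[OF supp_vminus])
    moreover have "vminus (vminus (bas (K, k # v)) (smul (qq - inverse qq) (bas (K, v))))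
        (smul ((-1) ^ (par m j * par m p) * (if p = j then qsub m j else 1)) (bas (B @ [j, p], v)))
       = smul (-1) (vminus (actT m K k v) (bas (K, k # v)))"
      using gt unfolding aT by (auto simp: vminus_def vplus_def smul_def fun_eq_iff algebra_simps)
    ultimately show ?thesis using rspan_smul[OF rel, of "-1"] by (simp add: smul_def[of "-1"])
  next
    case lt
    have "tmul (tmul (bas ([j], [])) (gvec m j p)) (bas (B, v)) = bas (K, k # v)"
      using lt by (simp add: gvec_def b1 c1)
    moreover have "vminus (bas (K, k # v))
        (smul ((-1) ^ (par m j * par m p) * (if p = j then qsub m j else 1)) (bas (B @ [j, p], v)))
       = smul (-1) (vminus (actT m K k v) (bas (K, k # v)))"
      using lt unfolding aT by (auto simp: vminus_def vplus_def smul_def fun_eq_iff algebra_simps)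
    ultimately show ?thesis using rspan_smul[OF rel, of "-1"] by (simp add: smul_def[of "-1"])
  next
    case eq
    have pp: "par m j * par m j = par m j" by (simp add: par_def)
    have "tmul (tmul (bas ([j], [])) (gvec m j p)) (bas (B, v)) = bas (K, k # v)"
    proof -
      have "gvec m j p = bas ([p], [Suc 0])" using eq by (simp add: gvec_def)
      then show ?thesis by (simp only: b1 c1)
    qed
    moreover have "vminus (bas (K, k # v))
        (smul ((-1) ^ (par m j * par m p) * (if p = j then qsub m j else 1)) (bas (B @ [j, p], v)))
       = smul (-1) (vminus (actT m K k v) (bas (K, k # v)))"
      using eq unfolding aT by (auto simp: vminus_def vplus_def smul_def fun_eq_iff algebra_simps pp K_def)
    ultimately show ?thesis using rspan_smul[OF rel, of "-1"] by (simp add: smul_def[of "-1"])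
  qed
qed

lemma foldr_freeT: "(\<And>x. x \<in> set xs \<Longrightarrow> x \<in> freeT m n) \<Longrightarrow> Z \<in> freeT m n \<Longrightarrow> foldr tmul xs Z \<in> freeT m n"
  by (induction xs) (auto intro: tmul_freeT)

lemma lsh_eq_ext: "finite (supp Z) \<Longrightarrow> lsh p Z = ext (\<lambda>b. bas (fst b @ [p], snd b)) Z"
proof -
  assume "finite (supp Z)"
  then have "lsh p Z = lsh p (ext bas Z)" by (simp add: ext_bas_id)
  also have "\<dots> = ext (\<lambda>b. bas (fst b @ [p], snd b)) Z"
    unfolding lsh_ext by (rule arg_cong[where f="\<lambda>F. ext F Z"]) (auto simp: lsh_bas[symmetric])
  finally show ?thesis .
qed

lemma move:
  assumes j: "1 \<le> j" "j \<le> m + n" and P: "set P \<subseteq> {1..m+n}" and Z: "Z \<in> freeT m n"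
  shows "vminus (lsh j (foldr tmul (map (gvec m j) (rev P)) Z))
    (smul ((-1) ^ (par m j * sum_list (map (par m) P)) * qsub m j ^ length (filter (\<lambda>i. i = j) P))
       (ext (\<lambda>b. bas (fst b @ j # P, snd b)) Z)) \<in> R m n"
  using P
proof (induction P rule: rev_induct)
  case Nil
  show ?case using lsh_eq_ext[OF freeT_fin[OF Z], of j] R_refl by (simp add: smul_def)
next
  case (snoc p P)
  define Z' where "Z' = foldr tmul (map (gvec m j) (rev P)) Z"
  have p: "1 \<le> p" "p \<le> m + n" using snoc.prems by auto
  have Z': "Z' \<in> freeT m n" unfolding Z'_def
    by (rule foldr_freeT) (use snoc.prems Z in \<open>auto intro!: gvec_freeT\<close>)
  have fZ': "finite (supp Z')" using Z' freeT_fin by blast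
  have fg: "finite (supp (gvec m j p))" using gvec_freeT[OF p] freeT_fin by blast
  have fe: "finite (supp (bas ([j], [])))" by simp
  define \<alpha> where "\<alpha> = (-1::K) ^ (par m j * sum_list (map (par m) P)) * qsub m j ^ length (filter (\<lambda>i. i = j) P)"
  define \<beta> where "\<beta> = (-1::K) ^ (par m j * par m p) * (if p = j then qsub m j else 1)"
  have IH: "vminus (lsh j Z') (smul \<alpha> (ext (\<lambda>b. bas (fst b @ j # P, snd b)) Z)) \<in> R m n"
    using snoc.IH snoc.prems unfolding Z'_def \<alpha>_def by auto
  have "lsh j (foldr tmul (map (gvec m j) (rev (P @ [p]))) Z) = lsh j (tmul (gvec m j p) Z')"
    by (simp add: Z'_def)
  also have "\<dots> = tmul (bas ([j], [])) (tmul (gvec m j p) Z')"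
    by (rule tmul_ej[symmetric]) (rule finite_supp_tmul[OF fg fZ'])
  also have "\<dots> = tmul (tmul (bas ([j], [])) (gvec m j p)) Z'"
    by (rule tmul_assoc[symmetric, OF fe fg fZ'])
  also have "\<dots> = ext (\<lambda>b. tmul (tmul (bas ([j], [])) (gvec m j p)) (bas b)) Z'"
    by (rule tmul_ext[OF finite_supp_tmul[OF fe fg] fZ'])
  finally have e1: "lsh j (foldr tmul (map (gvec m j) (rev (P @ [p]))) Z) = \<dots>" .
  have s1: "vminus (ext (\<lambda>b. tmul (tmul (bas ([j], [])) (gvec m j p)) (bas b)) Z')
     (ext (\<lambda>b. smul \<beta> (bas (fst b @ [j, p], snd b))) Z') \<in> R m n"
  proof (rule ext_R)
    fix b assume "b \<in> supp Z'"
    then have "valid m n b" using Z' unfolding freeT_def by auto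
    then show "vminus (tmul (tmul (bas ([j], [])) (gvec m j p)) (bas b)) (smul \<beta> (bas (fst b @ [j, p], snd b))) \<in> R m n"
      using swap_bas[of m n "fst b" "snd b" j p] j p unfolding \<beta>_def by simp
  qed
  have e2: "ext (\<lambda>b. smul \<beta> (bas (fst b @ [j, p], snd b))) Z' = smul \<beta> (lsh p (lsh j Z'))"
  proof -
    have "lsh p (lsh j Z') = ext (\<lambda>b. bas (fst b @ [j, p], snd b)) Z'"
      unfolding lsh_eq_ext[OF fZ'] lsh_ext by (simp add: lsh_bas)
    then show ?thesis by (simp add: ext_smul)
  qed
  have s2: "vminus (lsh p (lsh j Z')) (smul \<alpha> (ext (\<lambda>b. bas (fst b @ j # P @ [p], snd b)) Z)) \<in> R m n"
  proof -
    have "lsh p (smul \<alpha> (ext (\<lambda>b. bas (fst b @ j # P, snd b)) Z)) = smul \<alpha> (ext (\<lambda>b. bas (fst b @ j # P @ [p], snd b)) Z)"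
      by (simp add: lsh_smul lsh_ext lsh_bas)
    then show ?thesis using lsh_R[OF IH p] by (simp add: lsh_vminus)
  qed
  have coef: "(-1) ^ (par m j * sum_list (map (par m) (P @ [p]))) * qsub m j ^ length (filter (\<lambda>i. i = j) (P @ [p])) = \<beta> * \<alpha>"
    unfolding \<alpha>_def \<beta>_def by (simp add: power_add distrib_left)
  have sm: "smul \<beta> (smul \<alpha> y) = smul (\<beta> * \<alpha>) y" for y by (simp add: smul_def fun_eq_iff mult.assoc)
  show ?case unfolding e1 coef sm[symmetric]
    by (rule R_trans[OF s1], unfold e2, rule R_smul[OF s2])
qed



lemma qq_ne: "qq - inverse qq \<noteq> 0"
proof -
  have "qq - inverse qq = Fract ([:0,1:] * [:0,1:] - 1) [:0,1:]"
    unfolding qq_def by (simp add: diff_fract)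
  moreover have "[:0,1:] * [:0,1:] - 1 \<noteq> (0::complex poly)"
  proof
    assume "[:0,1:] * [:0,1:] - 1 = (0::complex poly)"
    then have "coeff ([:0,1:] * [:0,1:] - 1) 2 = (0::complex)" by simp
    then show False by (simp add: coeff_mult numeral_2_eq_2)
  qed
  ultimately show ?thesis by (simp add: Zero_fract_def eq_fract)
qed

lemma qsub_ne: "qsub m j - inverse (qsub m j) \<noteq> 0"
  using qq_ne unfolding qsub_def by (auto simp: right_minus_eq)

lemma qsub_nz: "qsub m j \<noteq> 0"
  using qsub_ne[of m j] by (metis diff_self inverse_zero)

abbreviation cnt :: "nat \<Rightarrow> nat list \<Rightarrow> nat" where "cnt j I \<equiv> length (filter (\<lambda>i. i = j) I)"

lemma fin_smul: "finite (supp x) \<Longrightarrow> finite (supp (smul a x))"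
  using finite_subset[OF supp_smul] by blast

lemma fpart: "foldr tmul (map (fvec m j) (rev Q)) (bas ([], w)) = smul (inverse (qsub m j) ^ cnt j Q) (bas (Q, w))"
proof (induction Q rule: rev_induct)
  case Nil then show ?case by (simp add: smul_def)
next
  case (snoc x Q)
  have "foldr tmul (map (fvec m j) (rev (Q @ [x]))) (bas ([], w))
      = tmul (fvec m j x) (foldr tmul (map (fvec m j) (rev Q)) (bas ([], w)))" by simp
  also have "\<dots> = tmul (smul (if j = x then inverse (qsub m j) else 1) (bas ([x], []))) (smul (inverse (qsub m j) ^ cnt j Q) (bas (Q, w)))"
    unfolding snoc.IH by (simp add: fvec_def)
  also have "\<dots> = smul (if j = x then inverse (qsub m j) else 1) (smul (inverse (qsub m j) ^ cnt j Q) (bas (Q @ [x], w)))"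
    by (simp add: tmul_smul_left tmul_smul_right fin_smul tmul_bas_bas bmul_def) (auto simp: smul_def fun_eq_iff)
  also have "\<dots> = smul (inverse (qsub m j) ^ cnt j (Q @ [x])) (bas (Q @ [x], w))"
    by (auto simp: smul_def fun_eq_iff)
  finally show ?case .
qed

lemma foldr_fin: "(\<And>x. x \<in> set xs \<Longrightarrow> finite (supp x)) \<Longrightarrow> finite (supp Z) \<Longrightarrow> finite (supp (foldr tmul xs Z))"
  by (induction xs) (auto intro: finite_supp_tmul)

lemma tprod_right: assumes "\<And>x. x \<in> set xs \<Longrightarrow> finite (supp x)"
  shows "tmul (tprod xs) (bas ([], w)) = foldr tmul xs (bas ([], w))"
  using assms
proof (induction xs)
  case Nil then show ?case by (simp add: tprod_def tone_def tmul_bas_bas bmul_def)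
next
  case (Cons x xs)
  have f: "finite (supp (foldr tmul xs tone))" by (rule foldr_fin) (use Cons.prems in \<open>auto simp: tone_def\<close>)
  have "tmul (tprod (x # xs)) (bas ([], w)) = tmul (tmul x (foldr tmul xs tone)) (bas ([], w))"
    by (simp add: tprod_def)
  also have "\<dots> = tmul x (tmul (tprod xs) (bas ([], w)))"
    unfolding tprod_def by (rule tmul_assoc) (use Cons.prems f in auto)
  finally show ?case using Cons by simp
qed

lemma ext_smul_bas: "ext F (smul c (bas b0)) = smul c (F b0)"
proof (cases "c = 0")
  case True then show ?thesis by (simp add: ext_def smul_def supp_def)
next
  case False
  then have "supp (smul c (bas b0)) = {b0}" by (auto simp: supp_def smul_def bas_def)
  then show ?thesis by (simp add: ext_def smul_def bas_def)
qed

definition Nq :: "nat \<Rightarrow> nat \<Rightarrow> nat list \<Rightarrow> K" where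
  "Nq m j I = (\<Sum>k\<in>{1..length I}. if I ! (k - 1) = j then qsub m j ^ cnt j (drop k I) * inverse (qsub m j) ^ cnt j (take (k - 1) I) else 0)"

lemma Nq_cons: "Nq m j (x # I) = (if x = j then qsub m j ^ cnt j I else 0) + (if x = j then inverse (qsub m j) else 1) * Nq m j I"
proof -
  define h where "h I k = (if I ! (k - 1) = j then qsub m j ^ cnt j (drop k I) * inverse (qsub m j) ^ cnt j (take (k - 1) I) else 0)" for I k
  have N: "Nq m j I = sum (h I) {1..length I}" for I unfolding Nq_def h_def ..
  have "sum (h (x # I)) {1..Suc (length I)} = h (x # I) 1 + sum (h (x # I)) {Suc 1..Suc (length I)}"
    by (rule sum.atLeast_Suc_atMost) simp
  also have "sum (h (x # I)) {Suc 1..Suc (length I)} = sum (\<lambda>k. h (x # I) (Suc k)) {1..length I}"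
    by (rule sum.shift_bounds_cl_Suc_ivl)
  also have "\<dots> = sum (\<lambda>k. (if x = j then inverse (qsub m j) else 1) * h I k) {1..length I}"
  proof (rule sum.cong[OF refl])
    fix k assume "k \<in> {1..length I}"
    then obtain k' where k: "k = Suc k'" by (cases k) auto
    show "h (x # I) (Suc k) = (if x = j then inverse (qsub m j) else 1) * h I k"
      unfolding h_def k by auto
  qed
  finally show ?thesis unfolding N by (simp add: h_def sum_distrib_left)
qed

lemma Nq_id: "(qsub m j - inverse (qsub m j)) * Nq m j I = qsub m j ^ cnt j I - inverse (qsub m j) ^ cnt j I"
proof (induction I)
  case Nil then show ?case by (simp add: Nq_def)
next
  case (Cons x I)
  have nz: "qsub m j \<noteq> 0" by (rule qsub_nz)
  show ?case
  proof (cases "x = j")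
    case True
    have "(qsub m j - inverse (qsub m j)) * Nq m j (x # I) =
        (qsub m j - inverse (qsub m j)) * qsub m j ^ cnt j I + inverse (qsub m j) * ((qsub m j - inverse (qsub m j)) * Nq m j I)"
      unfolding Nq_cons using True by (simp add: algebra_simps)
    also have "\<dots> = qsub m j ^ cnt j (x # I) - inverse (qsub m j) ^ cnt j (x # I)"
      unfolding Cons.IH using True nz by (simp add: algebra_simps)
    finally show ?thesis .
  next
    case False
    then show ?thesis unfolding Nq_cons using Cons.IH by simp
  qed
qed

lemma basis_main:
  assumes v: "valid m n (I, w)" and j: "1 \<le> j" "j \<le> m + n"
  shows "vminus (lsh j (Ldual m j (I, w))) (smul (Nq m j I) (bas (I, w))) \<in> R m n"
proof -
  define T where "T k = tmul (tprod (map (gvec m j) (rev (drop k I)) @ map (fvec m j) (rev (take (k - 1) I)))) (bas ([], w))" for k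
  define s where "s k = (-1::K) ^ (par m j * sum_list (map (par m) (drop k I)))" for k
  define e where "e k = qsub m j ^ cnt j (drop k I) * inverse (qsub m j) ^ cnt j (take (k - 1) I)" for k
  have rng: "set I \<subseteq> {1..m+n}" using v by (auto simp: valid_def)
  have L: "Ldual m j (I, w) = (\<lambda>c. \<Sum>k\<in>{1..length I}. (s k * (if I ! (k - 1) = j then 1 else 0)) * T k c)"
    by (simp add: Ldual_def s_def T_def)
  have 1: "lsh j (Ldual m j (I, w)) = (\<lambda>c. \<Sum>k\<in>{1..length I}. (s k * (if I ! (k - 1) = j then 1 else 0)) * lsh j (T k) c)"
    unfolding L lsh_def by (auto simp: fun_eq_iff)
  have 2: "smul (Nq m j I) (bas (I, w)) = (\<lambda>c. \<Sum>k\<in>{1..length I}. (if I ! (k - 1) = j then e k else 0) * bas (I, w) c)"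
    unfolding e_def Nq_def smul_def by (simp add: sum_distrib_right fun_eq_iff)
  have "vminus (lsh j (Ldual m j (I, w))) (smul (Nq m j I) (bas (I, w))) =
    (\<lambda>c. \<Sum>k\<in>{1..length I}. (\<lambda>c. (s k * (if I ! (k - 1) = j then 1 else 0)) * lsh j (T k) c - (if I ! (k - 1) = j then e k else 0) * bas (I, w) c) c)"
    unfolding 1 2 vminus_def by (simp add: sum_subtractf)
  also have "\<dots> \<in> R m n"
  proof (rule rspan_sum)
    fix k assume k: "k \<in> {1..length I}"
    show "(\<lambda>c. (s k * (if I ! (k - 1) = j then 1 else 0)) * lsh j (T k) c - (if I ! (k - 1) = j then e k else 0) * bas (I, w) c) \<in> R m n"
    proof (cases "I ! (k - 1) = j")
      case False then show ?thesis using rspan_zero by simp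
    next
      case True
      define P where "P = drop k I"
      define Q where "Q = take (k - 1) I"
      have I: "I = Q @ j # P" unfolding P_def Q_def using True k id_take_nth_drop[of "k - 1" I] by auto
      have Pr: "set P \<subseteq> {1..m+n}" "set Q \<subseteq> {1..m+n}" using rng unfolding P_def Q_def
        by (meson in_set_dropD subset_iff, meson in_set_takeD subset_iff)
      define c0 where "c0 = inverse (qsub m j) ^ cnt j Q"
      have vQ: "valid m n (Q, w)" using v Pr by (auto simp: valid_def)
      have Z: "smul c0 (bas (Q, w)) \<in> freeT m n" by (rule smul_freeT, rule bas_freeT, rule vQ)
      have finall: "finite (supp x)" if "x \<in> set (map (gvec m j) (rev P) @ map (fvec m j) (rev Q))" for x
        using that Pr by (auto intro!: freeT_fin[OF gvec_freeT] freeT_fin[OF fvec_freeT])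
      have Tk: "T k = foldr tmul (map (gvec m j) (rev P)) (smul c0 (bas (Q, w)))"
        unfolding T_def P_def[symmetric] Q_def[symmetric] c0_def
        by (subst tprod_right) (use finall in \<open>auto simp: fpart\<close>)
      have mv: "vminus (lsh j (T k)) (smul (s k * qsub m j ^ cnt j P) (smul c0 (bas (I, w)))) \<in> R m n"
      proof -
        have sk: "s k = (-1) ^ (par m j * sum_list (map (par m) P))" by (simp add: s_def P_def)
        show ?thesis using move[OF j Pr(1) Z] unfolding Tk sk ext_smul_bas fst_conv snd_conv I[symmetric] .
      qed
      have ss: "s k * s k = 1" unfolding s_def by (simp add: power_add[symmetric])
      have "vminus (smul (s k) (lsh j (T k))) (smul (s k) (smul (s k * qsub m j ^ cnt j P) (smul c0 (bas (I, w))))) \<in> R m n"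
        by (rule R_smul[OF mv])
      moreover have "e k = qsub m j ^ cnt j P * c0" unfolding e_def c0_def P_def Q_def ..
      ultimately show ?thesis
      proof -
        assume H: "vminus (smul (s k) (lsh j (T k))) (smul (s k) (smul (s k * qsub m j ^ cnt j P) (smul c0 (bas (I, w))))) \<in> R m n"
          and E: "e k = qsub m j ^ cnt j P * c0"
        have "s k * (s k * qsub m j ^ cnt j P * (c0 * b)) = e k * b" for b
          unfolding E by (simp add: mult.assoc[symmetric] ss)
        then have "vminus (smul (s k) (lsh j (T k))) (smul (s k) (smul (s k * qsub m j ^ cnt j P) (smul c0 (bas (I, w)))))
          = (\<lambda>c. (s k * (if I ! (k - 1) = j then 1 else 0)) * lsh j (T k) c - (if I ! (k - 1) = j then e k else 0) * bas (I, w) c)"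
          using True by (simp add: vminus_def smul_def fun_eq_iff)
        then show ?thesis using H by simp
      qed
    qed
  qed
  finally show ?thesis .
qed

lemma supp_sumfun: "supp (\<lambda>c. \<Sum>i\<in>S. v i c) \<subseteq> (\<Union>i\<in>S. supp (v i))"
proof
  fix c assume "c \<in> supp (\<lambda>c. \<Sum>i\<in>S. v i c)"
  then have "(\<Sum>i\<in>S. v i c) \<noteq> 0" by (simp add: supp_def)
  then obtain i where "i \<in> S" "v i c \<noteq> 0" using sum.not_neutral_contains_not_neutral by blast
  then show "c \<in> (\<Union>i\<in>S. supp (v i))" by (auto simp: supp_def)
qed

lemma supp_ext: "supp (ext F x) \<subseteq> (\<Union>b\<in>supp x. supp (F b))"
proof
  fix c assume "c \<in> supp (ext F x)"
  then have "(\<Sum>b\<in>supp x. x b * F b c) \<noteq> 0" by (simp add: supp_def ext_def)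
  then obtain b where "b \<in> supp x" "x b * F b c \<noteq> 0" using sum.not_neutral_contains_not_neutral by blast
  moreover then have "c \<in> supp (F b)" by (simp add: supp_def)
  ultimately show "c \<in> (\<Union>b\<in>supp x. supp (F b))" by blast
qed

lemma fin_vminus: "finite (supp x) \<Longrightarrow> finite (supp y) \<Longrightarrow> finite (supp (vminus x y))"
  using finite_subset[OF supp_vminus] by blast

lemma fin_gvec: "finite (supp (gvec m j r))"
  unfolding gvec_def by (auto intro!: fin_vminus fin_smul)

lemma fin_fvec: "finite (supp (fvec m j r))"
  unfolding fvec_def by (auto intro!: fin_smul)

lemma fin_Ldual: "finite (supp (Ldual m j b))"
proof -
  obtain I w where b: "b = (I, w)" by (cases b)
  have "supp (Ldual m j b) \<subseteq> (\<Union>k\<in>{1..length I}. supp (\<lambda>c. ((-1) ^ (par m j * sum_list (map (par m) (drop k I))) * (if I ! (k - 1) = j then 1 else 0))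
        * tmul (tprod (map (gvec m j) (rev (drop k I)) @ map (fvec m j) (rev (take (k - 1) I)))) (bas ([], w)) c))"
    (is "_ \<subseteq> ?U")
    unfolding b Ldual_def Let_def fst_conv snd_conv by (rule supp_sumfun)
  moreover have ft: "finite (supp (\<lambda>c. a * tmul (tprod xs) (bas ([], w)) c))" if "\<forall>x\<in>set xs. finite (supp x)" for a xs
  proof -
    have "finite (supp (tmul (tprod xs) (bas ([], w))))"
      by (rule finite_supp_tmul, unfold tprod_def, rule foldr_fin) (use that in \<open>auto simp: tone_def\<close>)
    then show ?thesis using fin_smul[of _ a] by (simp add: smul_def)
  qed
  ultimately have "finite ?U"
    by (intro finite_UN_I finite_atLeastAtMost) (rule ft, auto simp: fin_gvec fin_fvec)
  then show ?thesis using \<open>supp (Ldual m j b) \<subseteq> ?U\<close> by (rule finite_subset[rotated])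
qed

theorem lemma6p2:
  fixes m n j :: nat and x :: vec
  assumes "1 \<le> m" and "1 \<le> n" and "1 \<le> j" and "j \<le> m + n" and "x \<in> freeT m n"
  shows "tequiv m n (ext (Lvec j) (ext (Ldual m j) x))
           (smul (inverse (qsub m j - inverse (qsub m j))) (vminus (ext (Kvec m j) x) (ext (Kinv m j) x)))"
proof -
  have fx: "finite (supp x)" using assms(5) by (rule freeT_fin)
  have fy: "finite (supp (ext (Ldual m j) x))"
    by (rule finite_subset[OF supp_ext]) (use fx fin_Ldual in auto)
  have L: "ext (Lvec j) (ext (Ldual m j) x) = ext (\<lambda>b. lsh j (Ldual m j b)) x"
    unfolding ext_Lvec[OF fy] lsh_ext ..
  have Rhs: "smul (inverse (qsub m j - inverse (qsub m j))) (vminus (ext (Kvec m j) x) (ext (Kinv m j) x))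
      = ext (\<lambda>b. smul (Nq m j (fst b)) (bas b)) x"
  proof
    fix c
    have N: "Nq m j I = inverse (qsub m j - inverse (qsub m j)) * (qsub m j ^ cnt j I - inverse (qsub m j) ^ cnt j I)" for I
      using Nq_id[of m j I] qsub_ne[of m j] by (metis nonzero_mult_div_cancel_left divide_inverse_commute)
    show "smul (inverse (qsub m j - inverse (qsub m j))) (vminus (ext (Kvec m j) x) (ext (Kinv m j) x)) c
      = ext (\<lambda>b. smul (Nq m j (fst b)) (bas b)) x c"
      unfolding smul_def vminus_def ext_def Kvec_def Kinv_def N
      by (simp add: sum_subtractf[symmetric] sum_distrib_left algebra_simps)
  qed
  show ?thesis unfolding tequiv_def L Rhs
  proof (rule ext_R)
    fix b assume "b \<in> supp x"
    then have v: "valid m n b" using assms(5) unfolding freeT_def by auto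
    obtain I w where b: "b = (I, w)" by (cases b)
    show "vminus (lsh j (Ldual m j b)) (smul (Nq m j (fst b)) (bas b)) \<in> R m n"
      unfolding b fst_conv by (rule basis_main) (use v b assms in auto)
  qed
qed

end
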